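(* Let $m\ge1$, $y\in\mathbb{R}^{2m+1}_+$ with $c:=\sqrt{\sum_{i=0}^{2m}y_i}>0$, and let $(x^t)_{t\ge0}$ be generated by $$x^{t+1}_j=x^t_j\,\frac1c\sum_{\ell=0}^m\frac{x^t_\ell\,y_{\ell+j}}{(x^t*x^t)_{\ell+j}},\qquad j=0,\dots,m,$$ from an initial $x^0\in\mathbb{R}^{m+1}_+$. Then $\mathcal{I}(y\|x^\infty*x^\infty)$ takes the same value for all limit points $x^\infty$ of $(x^t)$.
   Context: For $x\in\mathbb{R}^{m+1}$ set $x_k=0$ for $k<0$, $k>m$, and $(x*x)_i=\sum_{j=0}^i x_{i-j}x_j$ for $i=0,\dots,2m$. $\mathcal{I}(y\|v)=\sum_{i}\big(y_i\log\frac{y_i}{v_i}-y_i+v_i\big)$ (convention $0\log0=0$; $+\infty$ if some $y_i>0=v_i$). The iteration is assumed well-defined (denominators positive, e.g. $x^0>0$). *)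

theory Defs
  imports "HOL-Analysis.Analysis"
begin

text \<open>Vectors x in R^{m+1} are functions nat => real with x k = 0 for k > m.
  Self-convolution (x*x)_i = sum_{j=0..i} x_{i-j} x_j.\<close>
definition conv :: "(nat \<Rightarrow> real) \<Rightarrow> (nat \<Rightarrow> real) \<Rightarrow> nat \<Rightarrow> real" where
  "conv x z i = (\<Sum>j=0..i. x (i - j) * z j)"

definition step :: "nat \<Rightarrow> (nat \<Rightarrow> real) \<Rightarrow> (nat \<Rightarrow> real) \<Rightarrow> nat \<Rightarrow> real" where
  "step m y x = (\<lambda>j. if j \<le> m then
      x j * (1 / sqrt (\<Sum>i=0..2*m. y i)) * (\<Sum>l=0..m. x l * y (l + j) / conv x x (l + j))
    else 0)"

definition Idiv :: "nat \<Rightarrow> (nat \<Rightarrow> real) \<Rightarrow> (nat \<Rightarrow> real) \<Rightarrow> ereal" where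
  "Idiv m y v = (if \<exists>i\<le>2*m. y i > 0 \<and> v i = 0 then \<infinity>
     else ereal (\<Sum>i=0..2*m. (if y i = 0 then 0 else y i * ln (y i / v i)) - y i + v i))"

definition is_limit_point :: "nat \<Rightarrow> (nat \<Rightarrow> nat \<Rightarrow> real) \<Rightarrow> (nat \<Rightarrow> real) \<Rightarrow> bool" where
  "is_limit_point m X z \<longleftrightarrow> (\<forall>k>m. z k = 0) \<and>
     (\<exists>r. strict_mono r \<and> (\<forall>j\<le>m. (\<lambda>n. X (r n) j) \<longlonglongrightarrow> z j))"

end

theory Submission
  imports Defs
begin


lemma conv_reindex:
  fixes h :: "nat \<Rightarrow> nat \<Rightarrow> real"
  assumes "\<And>a b. a > m \<or> b > m \<Longrightarrow> h a b = 0"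
  shows "(\<Sum>i=0..2*m. \<Sum>j=0..i. h (i-j) j) = (\<Sum>a=0..m. \<Sum>b=0..m. h a b)"
proof -
  have "(\<Sum>i=0..2*m. \<Sum>j=0..i. h (i-j) j) = (\<Sum>(i,j)\<in>{(i,j). i+j \<le> 2*m}. h j i)"
    using sum.triangle_reindex_eq[of "\<lambda>i j. h j i" "2*m"] by (simp add: atLeast0AtMost)
  also have "\<dots> = (\<Sum>(i,j)\<in>{..m}\<times>{..m}. h j i)"
    by (rule sum.mono_neutral_right) (auto intro: assms finite_subset[of _ "{..2*m}\<times>{..2*m}"])
  also have "\<dots> = (\<Sum>i\<le>m. \<Sum>j\<le>m. h j i)"
    by (simp add: sum.cartesian_product)
  also have "\<dots> = (\<Sum>a=0..m. \<Sum>b=0..m. h a b)"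
    by (subst sum.swap) (simp add: atLeast0AtMost)
  finally show ?thesis .
qed

lemma jensen_ln:
  fixes p q :: "'a \<Rightarrow> real"
  assumes "finite A" "\<And>k. k\<in>A \<Longrightarrow> p k \<ge> 0" "sum p A = 1"
    "\<And>k. k\<in>A \<Longrightarrow> p k > 0 \<Longrightarrow> q k > 0" "\<And>k. k\<in>A \<Longrightarrow> q k \<ge> 0"
  shows "(\<Sum>k\<in>A. p k * ln (q k)) \<le> ln (\<Sum>k\<in>A. p k * q k)"
proof -
  define M where "M = (\<Sum>k\<in>A. p k * q k)"
  obtain k0 where k0: "k0 \<in> A" "p k0 > 0"
  proof (rule ccontr)
    assume "\<not> thesis"
    then have "\<forall>k\<in>A. p k = 0" using that assms(2) by force
    then show False using assms(3) by simp
  qed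
  have "M \<ge> p k0 * q k0" unfolding M_def
    by (rule member_le_sum) (use assms k0 in auto)
  moreover have "p k0 * q k0 > 0" using k0 assms(4) by auto
  ultimately have M: "M > 0" by linarith
  have "\<And>k. k \<in> A \<Longrightarrow> p k * ln (q k) \<le> p k * (ln M - 1) + p k * q k / M"
  proof -
    fix k assume k: "k \<in> A"
    show "p k * ln (q k) \<le> p k * (ln M - 1) + p k * q k / M"
    proof (cases "p k = 0")
      case True then show ?thesis by simp
    next
      case False
      then have pk: "p k > 0" using assms(2) k by force
      then have qk: "q k > 0" using assms(4) k by auto
      have "ln (q k / M) \<le> q k / M - 1" using qk M by (intro ln_le_minus_one) simp
      then have "ln (q k) \<le> ln M - 1 + q k / M" using qk M by (simp add: ln_div)
      then have "p k * ln (q k) \<le> p k * (ln M - 1 + q k / M)" using pk by (intro mult_left_mono) auto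
      then show ?thesis by (simp add: algebra_simps)
    qed
  qed
  then have "(\<Sum>k\<in>A. p k * ln (q k)) \<le> (\<Sum>k\<in>A. p k * (ln M - 1) + p k * q k / M)"
    by (rule sum_mono)
  also have "\<dots> = (ln M - 1) * sum p A + M / M"
    by (simp add: sum.distrib sum_distrib_right[symmetric] sum_divide_distrib[symmetric] M_def mult.commute)
  also have "\<dots> = ln M" using assms(3) M by simp
  finally show ?thesis unfolding M_def .
qed


definition Phi :: "nat \<Rightarrow> (nat \<Rightarrow> real) \<Rightarrow> (nat \<Rightarrow> real) \<Rightarrow> real" where
  "Phi m y x = (\<Sum>i=0..2*m. y i * ln (conv x x i)) - (\<Sum>j=0..m. x j)^2"

lemma conv_sum:
  assumes "\<And>k. k > m \<Longrightarrow> x k = 0"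
  shows "(\<Sum>i=0..2*m. conv x x i) = (\<Sum>j=0..m. x j)^2"
proof -
  have "(\<Sum>i=0..2*m. conv x x i) = (\<Sum>i=0..2*m. \<Sum>j=0..i. x (i-j) * x j)"
    by (simp add: conv_def)
  also have "\<dots> = (\<Sum>a=0..m. \<Sum>b=0..m. x a * x b)"
    by (rule conv_reindex) (use assms in auto)
  also have "\<dots> = (\<Sum>j=0..m. x j)^2"
    by (simp add: power2_eq_square sum_product)
  finally show ?thesis .
qed

lemma conv_nonneg:
  assumes "\<And>k. x k \<ge> 0" shows "conv x x i \<ge> 0"
  unfolding conv_def by (intro sum_nonneg) (simp add: assms)

lemma step_lemma:
  fixes x :: "nat \<Rightarrow> real"
  assumes y: "\<forall>i\<le>2*m. y i \<ge> 0"
    and c: "sqrt (\<Sum>i=0..2*m. y i) > 0"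
    and sup: "\<And>k. k > m \<Longrightarrow> x k = 0"
    and nn: "\<And>j. x j \<ge> 0"
    and vpos: "\<forall>i\<le>2*m. conv x x i > 0"
    and v'pos: "\<forall>i\<le>2*m. conv (step m y x) (step m y x) i > 0"
  shows "(\<Sum>j=0..m. step m y x j) = sqrt (\<Sum>i=0..2*m. y i)"
    and "Phi m y x \<le> Phi m y (step m y x)"
proof -
  define Y where "Y = (\<Sum>i=0..2*m. y i)"
  define c where "c = sqrt Y"
  define v where "v = conv x x"
  define x' where "x' = step m y x"
  define v' where "v' = conv x' x'"
  define r where "r j = (if j \<le> m then (1/c) * (\<Sum>l=0..m. x l * y (l+j) / v (l+j)) else 0)" for j
  have c0: "c > 0" using c unfolding c_def Y_def .
  have Y0: "Y > 0" using c0 unfolding c_def by simp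
  have cc: "c * c = Y" unfolding c_def using Y0 by simp
  have vnn: "v i \<ge> 0" for i unfolding v_def by (rule conv_nonneg) (rule nn)
  have r0: "r j \<ge> 0" for j
    unfolding r_def using c0 y vnn nn
    by (auto intro!: sum_nonneg mult_nonneg_nonneg divide_nonneg_nonneg)
  have x'eq: "x' j = x j * r j" for j
    unfolding x'_def step_def r_def v_def c_def Y_def using sup by auto
  have S: "(\<Sum>j=0..m. x j * r j) = c"
  proof -
    define h where "h a b = x a * x b * y (a+b) / v (a+b)" for a b
    have "(\<Sum>j=0..m. x j * r j) = (1/c) * (\<Sum>j=0..m. \<Sum>l=0..m. h j l)"
      unfolding r_def h_def by (simp add: sum_distrib_left sum_distrib_right algebra_simps)
    also have "(\<Sum>j=0..m. \<Sum>l=0..m. h j l) = (\<Sum>i=0..2*m. \<Sum>j=0..i. h (i-j) j)"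
      by (rule conv_reindex[symmetric]) (use sup in \<open>auto simp: h_def\<close>)
    also have "\<dots> = (\<Sum>i=0..2*m. y i / v i * (\<Sum>j=0..i. x (i-j) * x j))"
      unfolding h_def sum_distrib_left by (intro sum.cong refl) (auto simp: algebra_simps)
    also have "\<dots> = Y"
      unfolding Y_def using vpos by (intro sum.cong refl) (auto simp: v_def conv_def)
    finally have "c * (\<Sum>j=0..m. x j * r j) = c * c" using cc c0 by (simp add: field_simps)
    then show ?thesis using c0 by simp
  qed
  show "(\<Sum>j=0..m. step m y x j) = sqrt (\<Sum>i=0..2*m. y i)"
    using S x'eq unfolding x'_def c_def Y_def by simp
  define g where "g a b = y (a+b) * (x a * x b / v (a+b))" for a b
  have perI: "y i * (\<Sum>j=0..i. (x (i-j) * x j / v i) * (ln (r (i-j)) + ln (r j)))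
        \<le> y i * (ln (v' i) - ln (v i))" if i: "i \<le> 2*m" for i
  proof (cases "y i = 0")
    case True then show ?thesis by simp
  next
    case False
    then have yi: "y i > 0" using y i by force
    have vi: "v i > 0" using vpos i by (simp add: v_def)
    have v'i: "v' i > 0" using v'pos i by (simp add: v'_def x'_def)
    have pos: "r (i-j) > 0 \<and> r j > 0" if j: "j \<in> {0..i}" and p: "x (i-j) * x j / v i > 0" for j
    proof -
      have "x (i-j) * x j > 0" using p vi nn by (auto simp: zero_less_divide_iff)
      then have "x (i-j) \<noteq> 0" "x j \<noteq> 0" by auto
      then have a: "x (i-j) > 0" "x j > 0" using nn[of "i-j"] nn[of j] by auto
      then have am: "i - j \<le> m" "j \<le> m" using sup by (metis leI less_irrefl)+
      have ij: "(i-j) + j = i" "j + (i-j) = i" using j by auto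
      have t1: "x (i-j) * y ((i-j) + j) / v ((i-j)+j) > 0" using a yi vi ij by simp
      have t2: "x j * y (j + (i-j)) / v (j + (i-j)) > 0" using a yi vi ij by simp
      have "x (i-j) * y ((i-j) + j) / v ((i-j)+j) \<le> (\<Sum>l=0..m. x l * y (l+j) / v (l+j))"
        by (rule member_le_sum[of "i-j"]) (use am y vnn nn in \<open>auto intro!: divide_nonneg_nonneg mult_nonneg_nonneg\<close>)
      moreover have "x j * y (j + (i-j)) / v (j + (i-j)) \<le> (\<Sum>l=0..m. x l * y (l+(i-j)) / v (l+(i-j)))"
        by (rule member_le_sum[of j]) (use am y vnn nn in \<open>auto intro!: divide_nonneg_nonneg mult_nonneg_nonneg\<close>)
      ultimately show ?thesis using t1 t2 am c0 unfolding r_def by auto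
    qed
    have "(\<Sum>j\<in>{0..i}. (x (i-j) * x j / v i) * ln (r (i-j) * r j))
        \<le> ln (\<Sum>j\<in>{0..i}. (x (i-j) * x j / v i) * (r (i-j) * r j))"
    proof (rule jensen_ln)
      show "(\<Sum>j\<in>{0..i}. x (i-j) * x j / v i) = 1"
        using vi by (simp add: sum_divide_distrib[symmetric] v_def conv_def)
    qed (use nn vi r0 pos in \<open>auto intro!: divide_nonneg_nonneg\<close>)
    also have "(\<Sum>j\<in>{0..i}. (x (i-j) * x j / v i) * (r (i-j) * r j)) = v' i / v i"
      by (simp add: v'_def conv_def x'eq sum_divide_distrib algebra_simps)
    also have "ln (v' i / v i) = ln (v' i) - ln (v i)" using vi v'i by (simp add: ln_div)
    also have "(\<Sum>j\<in>{0..i}. (x (i-j) * x j / v i) * ln (r (i-j) * r j))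
        = (\<Sum>j=0..i. (x (i-j) * x j / v i) * (ln (r (i-j)) + ln (r j)))"
    proof (intro sum.cong refl)
      fix j assume j: "j \<in> {0..i}"
      show "(x (i-j) * x j / v i) * ln (r (i-j) * r j) = (x (i-j) * x j / v i) * (ln (r (i-j)) + ln (r j))"
      proof (cases "x (i-j) * x j / v i > 0")
        case True then show ?thesis using pos[OF j] by (simp add: ln_mult)
      next
        case False
        then have "x (i-j) * x j / v i = 0" using nn vi
          by (metis divide_nonneg_pos less_eq_real_def mult_nonneg_nonneg)
        then show ?thesis by (simp only: mult_zero_left)
      qed
    qed
    finally show ?thesis using yi by (intro mult_left_mono) auto
  qed
  have "(\<Sum>i=0..2*m. y i * (\<Sum>j=0..i. (x (i-j) * x j / v i) * (ln (r (i-j)) + ln (r j))))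
      = (\<Sum>i=0..2*m. \<Sum>j=0..i. g (i-j) j * (ln (r (i-j)) + ln (r j)))"
    unfolding g_def sum_distrib_left by (intro sum.cong refl) (auto simp: algebra_simps)
  also have "\<dots> = (\<Sum>a=0..m. \<Sum>b=0..m. g a b * (ln (r a) + ln (r b)))"
    by (rule conv_reindex) (use sup in \<open>auto simp: g_def\<close>)
  also have "\<dots> = (\<Sum>a=0..m. \<Sum>b=0..m. g a b * ln (r a)) + (\<Sum>a=0..m. \<Sum>b=0..m. g a b * ln (r b))"
    by (simp add: algebra_simps sum.distrib)
  also have "(\<Sum>a=0..m. \<Sum>b=0..m. g a b * ln (r b)) = (\<Sum>a=0..m. \<Sum>b=0..m. g a b * ln (r a))"
    by (subst sum.swap) (simp add: g_def algebra_simps)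
  also have "(\<Sum>a=0..m. \<Sum>b=0..m. g a b * ln (r a)) = (\<Sum>a=0..m. c * (x a * r a * ln (r a)))"
  proof (intro sum.cong refl)
    fix a assume a: "a \<in> {0..m}"
    have "(\<Sum>b=0..m. g a b * ln (r a)) = x a * ln (r a) * (\<Sum>b=0..m. x b * y (b+a) / v (b+a))"
      unfolding g_def sum_distrib_left by (intro sum.cong refl) (simp add: algebra_simps)
    also have "(\<Sum>b=0..m. x b * y (b+a) / v (b+a)) = c * r a" using a c0 by (simp add: r_def)
    finally show "(\<Sum>b=0..m. g a b * ln (r a)) = c * (x a * r a * ln (r a))" by simp
  qed
  finally have L: "(\<Sum>i=0..2*m. y i * (\<Sum>j=0..i. (x (i-j) * x j / v i) * (ln (r (i-j)) + ln (r j))))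
      = 2 * c * (\<Sum>a=0..m. x a * r a * ln (r a))" by (simp add: sum_distrib_left mult.assoc)
  have E: "x a * r a * ln (r a) \<ge> x a * r a - x a" for a
  proof (cases "r a = 0")
    case True then show ?thesis using nn[of a] by simp
  next
    case False
    then have ra: "r a > 0" using r0[of a] by simp
    have "ln (1 / r a) \<le> 1 / r a - 1" using ra by (intro ln_le_minus_one) simp
    then have "ln (r a) \<ge> 1 - 1 / r a" using ra by (simp add: ln_div)
    then have "x a * r a * ln (r a) \<ge> x a * r a * (1 - 1 / r a)"
      using ra nn[of a] by (intro mult_left_mono) auto
    then show ?thesis using ra by (simp add: algebra_simps)
  qed
  define s where "s = (\<Sum>j=0..m. x j)"
  have "(\<Sum>a=0..m. x a * r a * ln (r a)) \<ge> (\<Sum>a=0..m. x a * r a - x a)"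
    by (intro sum_mono E)
  also have "(\<Sum>a=0..m. x a * r a - x a) = c - s" using S by (simp add: sum_subtractf s_def)
  finally have E2: "(\<Sum>a=0..m. x a * r a * ln (r a)) \<ge> c - s" .
  have "(\<Sum>i=0..2*m. y i * (ln (v' i) - ln (v i))) \<ge> 2 * c * (c - s)"
  proof -
    have "(\<Sum>i=0..2*m. y i * (ln (v' i) - ln (v i))) \<ge> 2 * c * (\<Sum>a=0..m. x a * r a * ln (r a))"
      unfolding L[symmetric] by (rule sum_mono) (rule perI, simp)
    moreover have "2 * c * (\<Sum>a=0..m. x a * r a * ln (r a)) \<ge> 2 * c * (c - s)"
      using E2 c0 by simp
    ultimately show ?thesis by linarith
  qed
  moreover have "(\<Sum>j=0..m. x' j)^2 = c^2" using S x'eq by simp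
  moreover have "(\<Sum>i=0..2*m. y i * (ln (v' i) - ln (v i))) = (\<Sum>i=0..2*m. y i * ln (v' i)) - (\<Sum>i=0..2*m. y i * ln (v i))"
    by (simp add: right_diff_distrib sum_subtractf)
  ultimately have "Phi m y x' - Phi m y x \<ge> 2 * c * (c - s) - c^2 + s^2"
    unfolding Phi_def s_def v_def v'_def by linarith
  moreover have "2 * c * (c - s) - c^2 + s^2 = (c - s)^2" by (simp add: power2_eq_square algebra_simps)
  ultimately show "Phi m y x \<le> Phi m y (step m y x)" unfolding x'_def
    by (smt (verit) zero_le_power2)
qed



lemma incseq_sub_le:
  fixes f :: "nat \<Rightarrow> real"
  assumes "incseq f" "strict_mono r1" "strict_mono r2"
    "(\<lambda>n. f (r1 n)) \<longlonglongrightarrow> a" "(\<lambda>n. f (r2 n)) \<longlonglongrightarrow> b"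
  shows "a \<le> b"
proof -
  have "f (r1 n) \<le> b" for n
  proof (rule LIMSEQ_le_const[OF assms(5)], intro exI allI impI)
    fix k assume "r1 n \<le> k"
    moreover have "k \<le> r2 k" using assms(3) by (simp add: seq_suble)
    ultimately show "f (r1 n) \<le> f (r2 k)" using assms(1) by (simp add: incseq_def)
  qed
  then show ?thesis by (intro LIMSEQ_le_const2[OF assms(4)]) auto
qed

lemma Idiv_eq:
  assumes y: "\<forall>i\<le>2*m. y i \<ge> 0" and sup: "\<And>k. k > m \<Longrightarrow> z k = 0"
    and pos: "\<forall>i\<le>2*m. y i > 0 \<longrightarrow> conv z z i > 0"
  shows "Idiv m y (conv z z) = ereal ((\<Sum>i=0..2*m. if y i = 0 then 0 else y i * ln (y i))
            - (\<Sum>i=0..2*m. y i) - Phi m y z)"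
proof -
  have nb: "\<not> (\<exists>i\<le>2*m. y i > 0 \<and> conv z z i = 0)" using pos by force
  have "(\<Sum>i=0..2*m. (if y i = 0 then 0 else y i * ln (y i / conv z z i)) - y i + conv z z i)
     = (\<Sum>i=0..2*m. ((if y i = 0 then 0 else y i * ln (y i)) - y i) - (y i * ln (conv z z i) - conv z z i))"
  proof (intro sum.cong refl)
    fix i assume i: "i \<in> {0..2*m}"
    show "(if y i = 0 then 0 else y i * ln (y i / conv z z i)) - y i + conv z z i
      = ((if y i = 0 then 0 else y i * ln (y i)) - y i) - (y i * ln (conv z z i) - conv z z i)"
    proof (cases "y i = 0")
      case False
      then have "y i > 0" using y i by force
      moreover then have "conv z z i > 0" using pos i by auto
      ultimately show ?thesis by (simp add: ln_div algebra_simps)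
    qed simp
  qed
  also have "\<dots> = (\<Sum>i=0..2*m. if y i = 0 then 0 else y i * ln (y i)) - (\<Sum>i=0..2*m. y i)
     - ((\<Sum>i=0..2*m. y i * ln (conv z z i)) - (\<Sum>i=0..2*m. conv z z i))"
    by (simp add: sum_subtractf)
  also have "(\<Sum>i=0..2*m. conv z z i) = (\<Sum>j=0..m. z j)^2" by (rule conv_sum) (rule sup)
  finally show ?thesis using nb unfolding Idiv_def Phi_def by simp
qed

theorem proposition5:
  fixes m :: nat and y :: "nat \<Rightarrow> real" and X :: "nat \<Rightarrow> nat \<Rightarrow> real"
  assumes "m \<ge> 1"
    and "\<forall>i\<le>2*m. y i \<ge> 0"
    and "sqrt (\<Sum>i=0..2*m. y i) > 0"
    and "\<forall>j\<le>m. X 0 j \<ge> 0"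
    and "\<forall>k>m. X 0 k = 0"
    and "\<forall>t. X (Suc t) = step m y (X t)"
    and "\<forall>t. \<forall>i\<le>2*m. conv (X t) (X t) i > 0"
    and "is_limit_point m X u"
    and "is_limit_point m X w"
  shows "Idiv m y (conv u u) = Idiv m y (conv w w)"
proof -
  note y = assms(2) and c = assms(3) and st = assms(6) and vp = assms(7)
  define Y where "Y = (\<Sum>i=0..2*m. y i)"
  define c where "c = sqrt Y"
  have c0: "c > 0" using c unfolding c_def Y_def .
  have Y0: "Y > 0" using c0 unfolding c_def by simp
  have props: "(\<forall>k>m. X t k = 0) \<and> (\<forall>j. X t j \<ge> 0)" for t
  proof (induction t)
    case 0
    have "X 0 j \<ge> 0" for j by (cases "j \<le> m") (use assms(4,5) in auto)
    then show ?case using assms(5) by blast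
  next
    case (Suc t)
    have "X (Suc t) j \<ge> 0" for j
      unfolding st[rule_format] step_def using Suc y c conv_nonneg[of "X t"]
      by (auto intro!: sum_nonneg mult_nonneg_nonneg divide_nonneg_nonneg)
    then show ?case unfolding st[rule_format] by (auto simp: step_def)
  qed
  have sup: "\<And>k. k > m \<Longrightarrow> X t k = 0" for t using props by blast
  have nn: "\<And>j. X t j \<ge> 0" for t using props by blast
  have v0: "\<forall>i\<le>2*m. conv (X t) (X t) i > 0" for t using vp by blast
  have v1: "\<forall>i\<le>2*m. conv (step m y (X t)) (step m y (X t)) i > 0" for t
  proof -
    have "\<forall>i\<le>2*m. conv (X (Suc t)) (X (Suc t)) i > 0" using vp by blast
    then show ?thesis using st by simp
  qed
  have supt: "\<And>k. k > m \<Longrightarrow> X t k = 0" for t using sup by blast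
  have nnt: "\<And>j. X t j \<ge> 0" for t using nn by blast
  have mono: "Phi m y (X t) \<le> Phi m y (X (Suc t))" for t
    using step_lemma(2)[OF y c supt nnt v0 v1] st by auto
  have inc: "incseq (\<lambda>t. Phi m y (X t))" by (rule incseq_SucI) (rule mono)
  have sumc: "(\<Sum>j=0..m. X (Suc t) j) = c" for t
    using step_lemma(1)[OF y c supt nnt v0 v1] st
    unfolding c_def Y_def by auto
  have csum: "(\<Sum>i=0..2*m. conv (X (Suc t)) (X (Suc t)) i) = Y" for t
  proof -
    have "\<And>k. k>m \<Longrightarrow> X (Suc t) k = 0" using sup by blast
    from conv_sum[OF this] show ?thesis using sumc[of t] c0 Y0 unfolding c_def by simp
  qed
  have convle: "conv (X (Suc t)) (X (Suc t)) k \<le> Y" if "k \<le> 2*m" for t k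
    unfolding csum[of t, symmetric]
    by (rule member_le_sum) (use that conv_nonneg nn in auto)
  define B where "B = Phi m y (X 0) + Y - Y * \<bar>ln Y\<bar>"
  have lower: "conv (X (Suc t)) (X (Suc t)) i \<ge> exp (B / y i)" if i: "i \<le> 2*m" "y i > 0" for t i
  proof -
    define v where "v = conv (X (Suc t)) (X (Suc t))"
    have vpos: "\<And>k. k \<le> 2*m \<Longrightarrow> v k > 0" using vp unfolding v_def by blast
    have P: "Phi m y (X (Suc t)) = (\<Sum>k=0..2*m. y k * ln (v k)) - Y"
      unfolding Phi_def v_def sumc using c0 unfolding c_def by simp
    have iin: "i \<in> {0..2*m}" using i by simp
    have split: "(\<Sum>k=0..2*m. y k * ln (v k)) = y i * ln (v i) + (\<Sum>k\<in>{0..2*m}-{i}. y k * ln (v k))"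
      using sum.remove[OF _ iin] by simp
    have "(\<Sum>k\<in>{0..2*m}-{i}. y k * ln (v k)) \<le> (\<Sum>k\<in>{0..2*m}-{i}. y k * \<bar>ln Y\<bar>)"
    proof (rule sum_mono)
      fix k assume k: "k \<in> {0..2*m}-{i}"
      have "ln (v k) \<le> ln Y" using vpos[of k] k convle[of k t] unfolding v_def by auto
      then have "ln (v k) \<le> \<bar>ln Y\<bar>" by linarith
      then show "y k * ln (v k) \<le> y k * \<bar>ln Y\<bar>" using y k by (intro mult_left_mono) auto
    qed
    also have "\<dots> = (\<Sum>k\<in>{0..2*m}-{i}. y k) * \<bar>ln Y\<bar>" by (simp add: sum_distrib_right)
    also have "\<dots> \<le> Y * \<bar>ln Y\<bar>"
      unfolding Y_def by (intro mult_right_mono sum_mono2) (use y in auto)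
    finally have "(\<Sum>k\<in>{0..2*m}-{i}. y k * ln (v k)) \<le> Y * \<bar>ln Y\<bar>" .
    moreover have "Phi m y (X 0) \<le> Phi m y (X (Suc t))" using inc by (simp add: incseq_def)
    ultimately have "y i * ln (v i) \<ge> B"
      using split P unfolding B_def by linarith
    then have "ln (v i) \<ge> B / y i" using i by (simp add: pos_divide_le_eq mult.commute)
    then have "exp (B / y i) \<le> exp (ln (v i))" by simp
    then show ?thesis using vpos[OF i(1)] unfolding v_def by simp
  qed
  have lim: "(\<lambda>n. Phi m y (X (r n))) \<longlonglongrightarrow> Phi m y z \<and> strict_mono r
       \<and> (\<forall>i\<le>2*m. y i > 0 \<longrightarrow> conv z z i > 0) \<and> (\<forall>k>m. z k = 0)"
    if lp: "is_limit_point m X z" and r: "strict_mono r \<and> (\<forall>j\<le>m. (\<lambda>n. X (r n) j) \<longlonglongrightarrow> z j)" for z r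
  proof -
    have zs: "\<forall>k>m. z k = 0" using lp unfolding is_limit_point_def by blast
    have conv_all: "(\<lambda>n. X (r n) k) \<longlonglongrightarrow> z k" for k
    proof (cases "k \<le> m")
      case True then show ?thesis using r by blast
    next
      case False then show ?thesis using zs sup by simp
    qed
    have cv: "(\<lambda>n. conv (X (r n)) (X (r n)) i) \<longlonglongrightarrow> conv z z i" for i
      unfolding conv_def by (intro tendsto_sum tendsto_mult conv_all)
    have zpos: "conv z z i > 0" if i: "i \<le> 2*m" "y i > 0" for i
    proof -
      have "exp (B / y i) \<le> conv z z i"
      proof (rule LIMSEQ_le_const[OF cv], intro exI allI impI)
        fix n :: nat assume "1 \<le> n"
        moreover have "n \<le> r n" using r by (simp add: seq_suble)
        ultimately have "r n = Suc (r n - 1)" by simp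
        then show "exp (B / y i) \<le> conv (X (r n)) (X (r n)) i" using lower[OF i, of "r n - 1"] by metis
      qed
      then show ?thesis using exp_gt_zero[of "B / y i"] by linarith
    qed
    have T: "(\<lambda>n. y i * ln (conv (X (r n)) (X (r n)) i)) \<longlonglongrightarrow> y i * ln (conv z z i)" if "i \<in> {0..2*m}" for i
    proof (cases "y i = 0")
      case True then show ?thesis by simp
    next
      case False
      moreover have "y i \<ge> 0" using y that by simp
      ultimately have "y i > 0" by linarith
      then have "conv z z i \<noteq> 0" using zpos[of i] that by auto
      then show ?thesis by (intro tendsto_intros cv)
    qed
    have "(\<lambda>n. Phi m y (X (r n))) \<longlonglongrightarrow> Phi m y z"
      unfolding Phi_def by (intro tendsto_diff tendsto_sum tendsto_power conv_all T)
    moreover have "strict_mono r" using r by (rule conjunct1)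
    moreover have "\<forall>i\<le>2*m. y i > 0 \<longrightarrow> conv z z i > 0" using zpos by blast
    ultimately show ?thesis using zs by (intro conjI)
  qed
  obtain ru where ru: "strict_mono ru \<and> (\<forall>j\<le>m. (\<lambda>n. X (ru n) j) \<longlonglongrightarrow> u j)"
    using assms(8) unfolding is_limit_point_def by blast
  obtain rw where rw: "strict_mono rw \<and> (\<forall>j\<le>m. (\<lambda>n. X (rw n) j) \<longlonglongrightarrow> w j)"
    using assms(9) unfolding is_limit_point_def by blast
  note Lu = lim[OF assms(8) ru] and Lw = lim[OF assms(9) rw]
  have "Phi m y u \<le> Phi m y w"
    by (rule incseq_sub_le[OF inc, of ru rw]) (use Lu Lw in blast)+
  moreover have "Phi m y w \<le> Phi m y u"
    by (rule incseq_sub_le[OF inc, of rw ru]) (use Lu Lw in blast)+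
  ultimately have "Phi m y u = Phi m y w" by simp
  then show ?thesis
    using Idiv_eq[OF y, of u] Idiv_eq[OF y, of w] Lu Lw by simp
qed

end
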